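(* Let $\phi:\mathbb{R}^d\to\mathbb{R}^d$ be a bi-Lipschitz homeomorphism preserving Lebesgue measure, and let $\beta\in L^\infty(\mathbb{R}^+\times\mathbb{R}^d)$ be such that $\mu=\mu_\beta$ is a Carleson measure, i.e. $\|\mu\|_{\mathcal C}<\infty$. Then $\mu^{\sharp\phi}$ is a Carleson measure and $$\|\mu^{\sharp\phi}\|_{\mathcal C}\le C\left(\|\mu\|_{\mathcal C}+\log(K_\phi)\,\|\beta\|^2_{L^\infty(\mathbb{R}^+\times\mathbb{R}^d)}\right),$$ where $C$ depends only on the dimension $d$.
   Context: For a bi-Lipschitz homeomorphism $\phi$ of $\mathbb{R}^d$, $K_\phi:=\sup_{x\neq y}\left(\frac{|\phi(x)-\phi(y)|}{|x-y|}+\frac{|x-y|}{|\phi(x)-\phi(y)|}\right)$; "preserving Lebesgue measure" means $|\phi(A)|=|A|$ for all measurable $A$. For a ball $B\subset\mathbb{R}^d$ of radius $r_B$, its Carleson box is $T(B)=\{(t,x):x\in B,\ 0<t\le r_B\}$. For a measure $\mu$ on $\mathbb{R}^+\times\mathbb{R}^d$, $\|\mu\|_{\mathcal C}=\sup_B |B|^{-1}\mu(T(B))$ (supremum over balls of $\mathbb{R}^d$); $\mu$ is a Carleson measure if this is finite. For a measurable $\beta:\mathbb{R}^+\times\mathbb{R}^d\to\mathbb{R}$, $\mu_\beta$ is the measure $d\mu_\beta(t,x)=|\beta(t,x)|^2\,\frac{dt\,dx}{t}$. The pull-back $\mu^{\sharp\phi}$ is defined by $\mu^{\sharp\phi}(I\times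 A)=\mu(I\times\phi^{-1}(A))$ for intervals $I\subset\mathbb{R}^+$ and measurable $A\subset\mathbb{R}^d$; for $\mu=\mu_\beta$ one has $d\mu^{\sharp\phi}(t,x)=|\beta(t,\phi(x))|^2\frac{dt\,dx}{t}$. *)

theory Defs
  imports "HOL-Analysis.Analysis" "HOL-Probability.Essential_Supremum"
begin

definition K_const :: "('a::euclidean_space \<Rightarrow> 'a) \<Rightarrow> real" where
  "K_const \<phi> = (SUP p \<in> {(x,y). x \<noteq> y}.
      dist (\<phi> (fst p)) (\<phi> (snd p)) / dist (fst p) (snd p)
    + dist (fst p) (snd p) / dist (\<phi> (fst p)) (\<phi> (snd p)))"

definition bi_lipschitz_homeo :: "('a::euclidean_space \<Rightarrow> 'a) \<Rightarrow> bool" where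
  "bi_lipschitz_homeo \<phi> \<longleftrightarrow> bij \<phi> \<and> continuous_on UNIV \<phi> \<and> continuous_on UNIV (inv \<phi>) \<and>
     (\<exists>L>0. \<forall>x y. dist (\<phi> x) (\<phi> y) \<le> L * dist x y \<and> dist x y \<le> L * dist (\<phi> x) (\<phi> y))"

definition preserves_lebesgue :: "('a::euclidean_space \<Rightarrow> 'a) \<Rightarrow> bool" where
  "preserves_lebesgue \<phi> \<longleftrightarrow> (\<forall>A \<in> sets lebesgue.
      \<phi> ` A \<in> sets lebesgue \<and> emeasure lebesgue (\<phi> ` A) = emeasure lebesgue A)"

definition upper_half :: "(real \<times> 'a::euclidean_space) measure" where
  "upper_half = restrict_space (lborel \<Otimes>\<^sub>M lborel) ({0<..} \<times> UNIV)"

definition Linfty :: "(real \<Rightarrow> 'a::euclidean_space \<Rightarrow> real) \<Rightarrow> bool" where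
  "Linfty \<beta> \<longleftrightarrow> (\<lambda>(t,x). \<beta> t x) \<in> borel_measurable upper_half \<and>
      esssup upper_half (\<lambda>(t,x). ereal \<bar>\<beta> t x\<bar>) < \<infinity>"

definition Linfty_norm :: "(real \<Rightarrow> 'a::euclidean_space \<Rightarrow> real) \<Rightarrow> real" where
  "Linfty_norm \<beta> = real_of_ereal (esssup upper_half (\<lambda>(t,x). ereal \<bar>\<beta> t x\<bar>))"

definition mu_beta :: "(real \<Rightarrow> 'a::euclidean_space \<Rightarrow> real) \<Rightarrow> (real \<times> 'a) measure" where
  "mu_beta \<beta> = density upper_half (\<lambda>(t,x). ennreal ((\<beta> t x)\<^sup>2 / t))"

definition carleson_box :: "'a::euclidean_space \<Rightarrow> real \<Rightarrow> (real \<times> 'a) set" where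
  "carleson_box x r = {(t,y). y \<in> ball x r \<and> 0 < t \<and> t \<le> r}"

definition carleson_norm :: "(real \<times> 'a::euclidean_space) measure \<Rightarrow> ennreal" where
  "carleson_norm \<mu> = (SUP p \<in> {p. snd p > (0::real)}.
      emeasure \<mu> (carleson_box (fst p) (snd p)) / emeasure lborel (ball (fst p) (snd p)))"

definition is_carleson :: "(real \<times> 'a::euclidean_space) measure \<Rightarrow> bool" where
  "is_carleson \<mu> \<longleftrightarrow> carleson_norm \<mu> < \<infinity>"

definition pullback :: "(real \<times> 'a::euclidean_space) measure \<Rightarrow> ('a \<Rightarrow> 'a) \<Rightarrow> (real \<times> 'a) measure" where
  "pullback \<mu> \<phi> = distr \<mu> upper_half (\<lambda>(t,x). (t, \<phi> x))"

end

theory Submission imports Defs begin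

lemma upper_half_eq: "upper_half = restrict_space lborel ({0<..} \<times> UNIV)"
  by (simp add: upper_half_def lborel_prod)

lemma K_facts:
  fixes \<phi> :: "'a::euclidean_space \<Rightarrow> 'a"
  assumes "bi_lipschitz_homeo \<phi>"
  shows "K_const \<phi> \<ge> 2" "\<And>x y. dist (\<phi> x) (\<phi> y) \<le> K_const \<phi> * dist x y"
proof -
  from assms obtain L where L: "L > 0" "\<And>x y. dist (\<phi> x) (\<phi> y) \<le> L * dist x y"
    "\<And>x y. dist x y \<le> L * dist (\<phi> x) (\<phi> y)" and bij: "bij \<phi>"
    unfolding bi_lipschitz_homeo_def by blast
  define g where "g = (\<lambda>p::'a\<times>'a. dist (\<phi> (fst p)) (\<phi> (snd p)) / dist (fst p) (snd p)
    + dist (fst p) (snd p) / dist (\<phi> (fst p)) (\<phi> (snd p)))"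
  have K: "K_const \<phi> = (SUP p \<in> {(x,y). x \<noteq> y}. g p)"
    unfolding K_const_def g_def by simp
  have inj: "\<And>x y. x \<noteq> y \<Longrightarrow> \<phi> x \<noteq> \<phi> y" using bij by (meson bij_def inj_def)
  have gb: "g p \<le> 2 * L" if hp: "p \<in> {(x,y). x \<noteq> y}" for p
  proof -
    obtain x y where p: "p = (x,y)" "x \<noteq> y" using hp by (cases p) auto
    have d1: "dist x y > 0" "dist (\<phi> x) (\<phi> y) > 0" using p inj by auto
    have "dist (\<phi> x) (\<phi> y) / dist x y \<le> L" using L(2)[of x y] d1 by (simp add: divide_le_eq)
    moreover have "dist x y / dist (\<phi> x) (\<phi> y) \<le> L" using L(3)[of x y] d1 by (simp add: divide_le_eq)
    ultimately show ?thesis unfolding g_def p by simp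
  qed
  have bdd: "bdd_above (g ` {(x,y). x \<noteq> y})" by (rule bdd_aboveI2[where M="2*L"]) (rule gb)
  have g2: "g p \<ge> 2" and gr: "g p \<ge> dist (\<phi> (fst p)) (\<phi> (snd p)) / dist (fst p) (snd p)"
    if hp: "p \<in> {(x,y). x \<noteq> y}" for p
  proof -
    obtain x y where p: "p = (x,y)" "x \<noteq> y" using hp by (cases p) auto
    have d1: "dist x y > 0" "dist (\<phi> x) (\<phi> y) > 0" using p inj by auto
    define a where "a = dist (\<phi> x) (\<phi> y) / dist x y"
    have a: "a > 0" using d1 unfolding a_def by simp
    have inv: "dist x y / dist (\<phi> x) (\<phi> y) = 1 / a" unfolding a_def by simp
    have "a + 1/a \<ge> 2"
    proof -
      have "(a - 1)^2 \<ge> 0" by simp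
      hence "a*a + 1 \<ge> 2*a" by (simp add: power2_eq_square algebra_simps)
      thus ?thesis using a by (simp add: field_simps)
    qed
    moreover have "g p = a + 1/a" unfolding g_def p by (simp add: a_def inv[symmetric])
    ultimately show "g p \<ge> 2" by simp
    show "g p \<ge> dist (\<phi> (fst p)) (\<phi> (snd p)) / dist (fst p) (snd p)"
      unfolding g_def p using d1 by simp
  qed
  obtain e :: 'a where e: "e \<in> Basis" using nonempty_Basis by blast
  have ne: "(0, e) \<in> {(x,y). x \<noteq> y}" using e by (auto simp: nonzero_Basis)
  show "K_const \<phi> \<ge> 2" unfolding K
    using cSUP_upper[OF ne bdd] g2[OF ne] by linarith
  show "dist (\<phi> x) (\<phi> y) \<le> K_const \<phi> * dist x y" for x y
  proof (cases "x = y")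
    case True then show ?thesis by simp
  next
    case False
    hence p: "(x,y) \<in> {(x,y). x \<noteq> y}" by simp
    have "dist (\<phi> x) (\<phi> y) / dist x y \<le> K_const \<phi>" unfolding K
      using cSUP_upper[OF p bdd] gr[OF p] by simp
    thus ?thesis using False by (simp add: divide_le_eq mult.commute)
  qed
qed

definition Om :: "(real \<times> 'a::euclidean_space) set" where "Om = {0<..} \<times> UNIV"

lemma id_borel_prod[measurable]: "(\<lambda>x. x) \<in> measurable (borel :: ('a::second_countable_topology \<times> 'b::second_countable_topology) measure) (borel \<Otimes>\<^sub>M borel)"
  by (rule measurable_ident_sets) (metis borel_prod)
lemma id_lborel_prod[measurable]: "(\<lambda>x. x) \<in> measurable (lborel :: ('a::euclidean_space \<times> 'b::euclidean_space) measure) (borel \<Otimes>\<^sub>M borel)"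
  by (rule measurable_ident_sets) (metis borel_prod sets_lborel)
lemma ball_borel[measurable]: "ball (x::'a::euclidean_space) r \<in> sets borel" by simp

lemma Om_sets[measurable]: "Om \<in> sets borel"
  unfolding Om_def by (intro borel_open open_Times) auto

lemma Om_sets'[measurable]: "Om \<in> sets lborel"
  by simp

lemma fst_bm[measurable]: "(fst :: 'a::topological_space \<times> 'b::topological_space \<Rightarrow> 'a) \<in> borel_measurable borel"
  by (intro borel_measurable_continuous_onI continuous_intros)

lemma snd_bm[measurable]: "(snd :: 'a::topological_space \<times> 'b::topological_space \<Rightarrow> 'b) \<in> borel_measurable borel"
  by (intro borel_measurable_continuous_onI continuous_intros)

definition dens :: "(real \<Rightarrow> 'a::euclidean_space \<Rightarrow> real) \<Rightarrow> real \<times> 'a \<Rightarrow> ennreal" where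
  "dens \<beta> p = ennreal ((\<beta> (fst p) (snd p))\<^sup>2 / fst p) * indicator Om p"

lemma beta_meas:
  assumes "Linfty \<beta>"
  shows "(\<lambda>p. if p \<in> Om then \<beta> (fst p) (snd p) else 0) \<in> borel_measurable lborel"
proof -
  have "(\<lambda>(t,x). \<beta> t x) \<in> borel_measurable (restrict_space lborel Om)"
    using assms unfolding Linfty_def upper_half_eq Om_def by simp
  hence "(\<lambda>p. if p \<in> Om then (\<lambda>(t,x). \<beta> t x) p else 0) \<in> borel_measurable lborel"
    by (subst (asm) measurable_restrict_space_iff) auto
  also have "(\<lambda>p. if p \<in> Om then (\<lambda>(t,x). \<beta> t x) p else 0) = (\<lambda>p. if p \<in> Om then \<beta> (fst p) (snd p) else 0)"
    by (auto simp: fun_eq_iff split: prod.splits)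
  finally show ?thesis .
qed

lemma dens_meas[measurable]:
  assumes "Linfty \<beta>"
  shows "dens \<beta> \<in> borel_measurable lborel"
proof -
  have m: "(\<lambda>p. if p \<in> Om then \<beta> (fst p) (snd p) else 0) \<in> borel_measurable lborel"
    by (rule beta_meas[OF assms])
  have "(\<lambda>p. ennreal (((\<lambda>p. if p \<in> Om then \<beta> (fst p) (snd p) else 0) p)\<^sup>2 / fst p) * indicator Om p)
     \<in> borel_measurable lborel" using m by measurable
  also have "(\<lambda>p. ennreal (((\<lambda>p. if p \<in> Om then \<beta> (fst p) (snd p) else 0) p)\<^sup>2 / fst p) * indicator Om p)
     = dens \<beta>" by (auto simp: dens_def fun_eq_iff indicator_def)
  finally show ?thesis .
qed

lemma mu_beta_emeasure:
  assumes "Linfty \<beta>" and A: "A \<in> sets lborel"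
  shows "emeasure (mu_beta \<beta>) (A \<inter> Om) = (\<integral>\<^sup>+p. dens \<beta> p * indicator A p \<partial>lborel)"
proof -
  have gm: "(\<lambda>p. \<beta> (fst p) (snd p)) \<in> borel_measurable (restrict_space lborel Om)"
    using assms(1) unfolding Linfty_def upper_half_eq Om_def by (simp add: case_prod_unfold)
  have fm': "fst \<in> borel_measurable (restrict_space lborel Om)"
    by (rule measurable_restrict_space1) simp
  have "(\<lambda>p. ennreal ((\<beta> (fst p) (snd p))\<^sup>2 / fst p)) \<in> borel_measurable (restrict_space lborel Om)"
    using gm fm' by measurable
  also have "(\<lambda>p. ennreal ((\<beta> (fst p) (snd p))\<^sup>2 / fst p)) = (\<lambda>(t,x). ennreal ((\<beta> t x)\<^sup>2 / t))"
    by (auto simp: fun_eq_iff)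
  finally have fm: "(\<lambda>(t,x). ennreal ((\<beta> t x)\<^sup>2 / t)) \<in> borel_measurable (restrict_space lborel Om)" .
  have AO: "A \<inter> Om \<in> sets (restrict_space lborel Om)"
    using A by (subst sets_restrict_space_iff) auto
  have "emeasure (mu_beta \<beta>) (A \<inter> Om) = (\<integral>\<^sup>+p. (\<lambda>(t,x). ennreal ((\<beta> t x)\<^sup>2 / t)) p * indicator (A \<inter> Om) p \<partial>restrict_space lborel Om)"
    unfolding mu_beta_def upper_half_eq Om_def[symmetric]
    by (rule emeasure_density[OF fm AO])
  also have "\<dots> = (\<integral>\<^sup>+p. (\<lambda>(t,x). ennreal ((\<beta> t x)\<^sup>2 / t)) p * indicator (A \<inter> Om) p * indicator Om p \<partial>lborel)"
    by (rule nn_integral_restrict_space) simp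
  also have "\<dots> = (\<integral>\<^sup>+p. dens \<beta> p * indicator A p \<partial>lborel)"
    by (rule nn_integral_cong) (auto simp: dens_def indicator_def split: prod.splits)
  finally show ?thesis .
qed

lemma beta_AE:
  assumes "Linfty \<beta>"
  shows "AE p in lborel. p \<in> Om \<longrightarrow> \<bar>\<beta> (fst p) (snd p)\<bar> \<le> Linfty_norm \<beta>"
proof -
  let ?e = "esssup upper_half (\<lambda>(t,x). ereal \<bar>\<beta> t x\<bar>)"
  have AE: "AE p in restrict_space lborel Om. (\<lambda>(t,x). ereal \<bar>\<beta> t x\<bar>) p \<le> ?e"
    using esssup_AE[of "(\<lambda>(t,x). ereal \<bar>\<beta> t x\<bar>)" upper_half] unfolding upper_half_eq Om_def by simp
  have fin: "?e < \<infinity>" using assms unfolding Linfty_def by simp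
  have "AE p in restrict_space lborel Om. \<bar>\<beta> (fst p) (snd p)\<bar> \<le> Linfty_norm \<beta>"
  proof (cases "?e = - \<infinity>")
    case True
    show ?thesis using AE by eventually_elim (simp add: True split: prod.splits)
  next
    case False
    then obtain c where c: "?e = ereal c" using fin by (cases ?e) auto
    show ?thesis using AE by eventually_elim (simp add: c Linfty_norm_def split: prod.splits)
  qed
  thus ?thesis by (subst (asm) AE_restrict_space_iff) auto
qed

lemma Collect_sets: "Measurable.pred M P \<Longrightarrow> space M = UNIV \<Longrightarrow> {x. P x} \<in> sets M"
  by (simp add: pred_def)

lemma cont_phi: "bi_lipschitz_homeo \<phi> \<Longrightarrow> continuous_on UNIV \<phi>"
  unfolding bi_lipschitz_homeo_def by blast

lemma phi_meas: "bi_lipschitz_homeo \<phi> \<Longrightarrow> \<phi> \<in> borel_measurable borel"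
  by (rule borel_measurable_continuous_onI) (rule cont_phi)

lemma preimage_measure:
  fixes \<phi> :: "'a::euclidean_space \<Rightarrow> 'a"
  assumes bl: "bi_lipschitz_homeo \<phi>" and pl: "preserves_lebesgue \<phi>" and S: "S \<in> sets borel"
  shows "emeasure lborel (\<phi> -` S) = emeasure lborel S"
proof -
  have m: "\<phi> -` S \<in> sets borel" using S phi_meas[OF bl] by (simp add: measurable_sets_borel)
  have surj: "surj \<phi>" using bl unfolding bi_lipschitz_homeo_def bij_def by blast
  have img: "\<phi> ` (\<phi> -` S) = S" using surj by (simp add: surj_image_vimage_eq)
  have ml: "\<phi> -` S \<in> sets lebesgue" using m by simp
  have "emeasure lebesgue (\<phi> ` (\<phi> -` S)) = emeasure lebesgue (\<phi> -` S)"
    using pl ml unfolding preserves_lebesgue_def by blast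
  hence "emeasure lebesgue S = emeasure lebesgue (\<phi> -` S)" using img by simp
  moreover have "emeasure lebesgue S = emeasure lborel S" using S by (simp add: emeasure_completion)
  moreover have "emeasure lebesgue (\<phi> -` S) = emeasure lborel (\<phi> -` S)" using m by (simp add: emeasure_completion)
  ultimately show ?thesis by simp
qed

lemma pullback_box:
  fixes \<phi> :: "'a::euclidean_space \<Rightarrow> 'a"
  assumes bl: "bi_lipschitz_homeo \<phi>"
  shows "emeasure (pullback (mu_beta \<beta>) \<phi>) (carleson_box x0 r)
    = emeasure (mu_beta \<beta>) ({p. \<phi> (snd p) \<in> ball x0 r \<and> fst p \<le> r} \<inter> Om)"
proof -
  let ?P = "\<lambda>(t::real, x::'a). (t, \<phi> x)"
  note [measurable] = phi_meas[OF bl]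
  have Pm: "?P \<in> borel_measurable borel" by measurable
  have Pm2: "?P \<in> measurable (restrict_space lborel Om) (restrict_space lborel Om)"
    by (rule measurable_restrict_space3) (use Pm in \<open>auto simp: Om_def\<close>)
  have Pm3: "?P \<in> measurable (mu_beta \<beta>) upper_half"
    unfolding mu_beta_def upper_half_eq Om_def[symmetric]
    by (subst measurable_cong_sets[OF sets_density refl]) (rule Pm2)
  have boxb: "carleson_box x0 r \<in> sets borel"
  proof -
    have "carleson_box x0 r = {p::real\<times>'a. snd p \<in> ball x0 r \<and> 0 < fst p \<and> fst p \<le> r}"
      unfolding carleson_box_def by auto
    also have "\<dots> \<in> sets borel" by measurable
    finally show ?thesis .
  qed
  have boxs: "carleson_box x0 r \<in> sets upper_half"
    unfolding upper_half_eq
    using boxb by (subst sets_restrict_space_iff) (auto simp: carleson_box_def Om_sets[unfolded Om_def])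
  have sp: "space (mu_beta \<beta>) = Om"
    by (simp add: mu_beta_def upper_half_eq Om_def space_restrict_space)
  show ?thesis
    unfolding pullback_def
    by (subst emeasure_distr[OF Pm3 boxs]) (auto simp: sp carleson_box_def Om_def intro!: arg_cong[where f="emeasure _"])
qed

lemma carleson_use:
  fixes \<mu> :: "(real \<times> 'a::euclidean_space) measure"
  assumes R: "R > 0"
  shows "emeasure \<mu> (carleson_box z R) \<le> carleson_norm \<mu> * ennreal (unit_ball_vol DIM('a) * R ^ DIM('a))"
proof -
  let ?v = "ennreal (unit_ball_vol DIM('a) * R ^ DIM('a))"
  have v: "emeasure lborel (ball z R) = ?v" using R by (simp add: emeasure_ball)
  have up: "unit_ball_vol (real DIM('a)) > 0" by (rule unit_ball_vol_pos) simp
  have pos: "unit_ball_vol (real DIM('a)) * R ^ DIM('a) > 0" using up R by simp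
  have vpos: "?v \<noteq> 0" "?v \<noteq> \<infinity>" using pos by (metis ennreal_eq_0_iff not_le) simp
  have "emeasure \<mu> (carleson_box z R) / ?v \<le> carleson_norm \<mu>"
    unfolding carleson_norm_def using R v by (intro SUP_upper2[of "(z,R)"]) auto
  hence "emeasure \<mu> (carleson_box z R) / ?v * ?v \<le> carleson_norm \<mu> * ?v"
    by (rule mult_right_mono) simp
  also have "emeasure \<mu> (carleson_box z R) / ?v * ?v = emeasure \<mu> (carleson_box z R)"
    using vpos by (simp add: ennreal_divide_times)
  finally show ?thesis .
qed

lemma int_inv:
  assumes a: "0 < a" "a \<le> r"
  shows "(\<integral>\<^sup>+t. ennreal (1/t) * indicator {a..r} t \<partial>lborel) = ennreal (ln r - ln a)"
proof -
  have "((\<lambda>t. 1/t) has_integral (ln r - ln a)) {a..r}"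
  proof (rule fundamental_theorem_of_calculus[OF a(2)])
    fix x assume x: "x \<in> {a..r}"
    hence "x > 0" using a by auto
    hence "(ln has_real_derivative 1/x) (at x within {a..r})"
      by (auto intro!: derivative_eq_intros)
    thus "(ln has_vector_derivative 1/x) (at x within {a..r})"
      by (simp add: has_real_derivative_iff_has_vector_derivative)
  qed
  thus ?thesis using a by (intro nn_integral_has_integral_lebesgue') auto
qed

lemma annulus_bound:
  fixes x0 :: "'a::euclidean_space" and r \<rho> :: real
  assumes r: "r > 0" and rho: "0 \<le> \<rho>" "\<rho> \<le> r"
  shows "emeasure lborel {x. dist x0 x < r \<and> \<rho> \<le> dist x0 x}
     \<le> ennreal (unit_ball_vol DIM('a) * r ^ DIM('a) * (real DIM('a) * (r - \<rho>) / r))"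
proof -
  let ?w = "unit_ball_vol (real DIM('a))"
  have w: "?w > 0" by (rule unit_ball_vol_pos) simp
  have eq: "{x. dist x0 x < r \<and> \<rho> \<le> dist x0 x} = ball x0 r - ball x0 \<rho>" by auto
  have "emeasure lborel (ball x0 r - ball x0 \<rho>) = emeasure lborel (ball x0 r) - emeasure lborel (ball x0 \<rho>)"
    using rho emeasure_lborel_ball_finite[of x0 \<rho>] by (intro emeasure_Diff) auto
  also have "\<dots> = ennreal (?w * r ^ DIM('a)) - ennreal (?w * \<rho> ^ DIM('a))"
    using r rho by (simp add: emeasure_ball)
  also have "\<dots> = ennreal (?w * r ^ DIM('a) - ?w * \<rho> ^ DIM('a))"
    using w rho by (intro ennreal_minus) simp
  also have "\<dots> \<le> ennreal (?w * r ^ DIM('a) * (real DIM('a) * (r - \<rho>) / r))"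
  proof (intro ennreal_leI)
    have "1 + real DIM('a) * (\<rho>/r - 1) \<le> (1 + (\<rho>/r - 1)) ^ DIM('a)"
      using r rho by (intro Bernoulli_inequality) (simp add: field_simps)
    hence "1 + real DIM('a) * (\<rho>/r - 1) \<le> \<rho> ^ DIM('a) / r ^ DIM('a)"
      by (simp add: power_divide)
    hence "r ^ DIM('a) * (1 + real DIM('a) * (\<rho>/r - 1)) \<le> \<rho> ^ DIM('a)"
      using r by (simp add: field_simps)
    hence "r ^ DIM('a) - \<rho> ^ DIM('a) \<le> r ^ DIM('a) * (real DIM('a) * (r - \<rho>) / r)"
      using r by (simp add: field_simps)
    hence "?w * (r ^ DIM('a) - \<rho> ^ DIM('a)) \<le> ?w * (r ^ DIM('a) * (real DIM('a) * (r - \<rho>) / r))"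
      using w by (intro mult_left_mono) auto
    thus "?w * r ^ DIM('a) - ?w * \<rho> ^ DIM('a) \<le> ?w * r ^ DIM('a) * (real DIM('a) * (r - \<rho>) / r)"
      by (simp add: algebra_simps)
  qed
  finally show ?thesis unfolding eq .
qed

lemma region1:
  fixes \<phi> :: "'a::euclidean_space \<Rightarrow> 'a" and \<beta> :: "real \<Rightarrow> 'a \<Rightarrow> real" and r :: real
  assumes bl: "bi_lipschitz_homeo \<phi>" and pl: "preserves_lebesgue \<phi>" and lb: "Linfty \<beta>" and r: "r > 0"
  shows "(\<integral>\<^sup>+p. dens \<beta> p * indicator {p. \<phi> (snd p) \<in> ball x0 r \<and> fst p \<le> r \<and>
            r - dist x0 (\<phi> (snd p)) \<le> 4 * K_const \<phi> * fst p} p \<partial>lborel)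
     \<le> ennreal ((Linfty_norm \<beta>)\<^sup>2 * (unit_ball_vol DIM('a) * r ^ DIM('a)) * (1 + ln (4 * real DIM('a) * K_const \<phi>)))"
proof -
  define K where "K = K_const \<phi>"
  define b where "b = Linfty_norm \<beta>"
  define d where "d = real DIM('a)"
  define w where "w = unit_ball_vol DIM('a) * r ^ DIM('a)"
  have K2: "K \<ge> 2" unfolding K_def by (rule K_facts(1)[OF bl])
  have d1: "d \<ge> 1" unfolding d_def by (simp add: DIM_positive Suc_le_eq)
  have up: "unit_ball_vol (real DIM('a)) > 0" by (rule unit_ball_vol_pos) simp
  have w0: "w > 0" unfolding w_def using up r by simp
  have dK1: "1 \<le> 4 * d * K"
  proof -
    have "1 * 1 \<le> d * K" using K2 d1 by (intro mult_mono) auto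
    thus ?thesis by simp
  qed
  define a where "a = r / (4 * d * K)"
  have a0: "a > 0" unfolding a_def using r K2 d1 by simp
  have ar: "a \<le> r"
  proof -
    have "1 * 1 \<le> d * K" using K2 d1 by (intro mult_mono) auto
    hence "1 \<le> 4 * d * K" by simp
    hence "r / (4 * d * K) \<le> r / 1" using r K2 d1 by (intro divide_left_mono) auto
    thus ?thesis unfolding a_def by simp
  qed
  have phim[measurable]: "\<phi> \<in> borel_measurable borel" by (rule phi_meas[OF bl])
  have phim2[measurable]: "\<phi> \<in> borel_measurable lborel" using phim by simp
  define Q where "Q = {p::real\<times>'a. \<phi> (snd p) \<in> ball x0 r \<and> fst p \<le> r \<and> r - dist x0 (\<phi> (snd p)) \<le> 4 * K * fst p}"
  define F where "F = (\<lambda>p::real\<times>'a. ennreal (b\<^sup>2 / fst p) * indicator (Q \<inter> Om) p)"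
  have QO: "Q \<inter> Om = {p::real\<times>'a. 0 < fst p \<and> fst p \<le> r \<and> dist x0 (\<phi> (snd p)) < r \<and> r - 4 * K * fst p \<le> dist x0 (\<phi> (snd p))}"
    unfolding Q_def Om_def by auto
  have QOs[measurable]: "Q \<inter> Om \<in> sets (lborel \<Otimes>\<^sub>M lborel)"
    unfolding QO by (rule Collect_sets) (measurable, simp add: space_pair_measure)
  have f1: "(\<lambda>t::real. ennreal (b\<^sup>2 / t)) \<in> borel_measurable lborel" by measurable
  have f2: "(\<lambda>p::real\<times>'a. ennreal (b\<^sup>2 / fst p)) \<in> borel_measurable (lborel \<Otimes>\<^sub>M lborel)"
    by (rule measurable_compose[OF measurable_fst f1])
  have Fm: "F \<in> borel_measurable (lborel \<Otimes>\<^sub>M lborel)"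
    unfolding F_def by (intro borel_measurable_times_ennreal f2 borel_measurable_indicator QOs)
  have step1: "(\<integral>\<^sup>+p. dens \<beta> p * indicator Q p \<partial>lborel) \<le> (\<integral>\<^sup>+p. F p \<partial>lborel)"
  proof (rule nn_integral_mono_AE)
    show "AE p in lborel. dens \<beta> p * indicator Q p \<le> F p"
      using beta_AE[OF lb]
    proof eventually_elim
      case (elim p)
      show ?case
      proof (cases "p \<in> Om")
        case True
        hence t: "fst p > 0" unfolding Om_def by auto
        have "\<bar>\<beta> (fst p) (snd p)\<bar> \<le> b" using elim True b_def by auto
        hence "\<bar>\<beta> (fst p) (snd p)\<bar>\<^sup>2 \<le> b\<^sup>2"
          by (intro power_mono) auto
        hence "(\<beta> (fst p) (snd p))\<^sup>2 \<le> b\<^sup>2" by simp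
        hence "(\<beta> (fst p) (snd p))\<^sup>2 / fst p \<le> b\<^sup>2 / fst p" using t by (simp add: divide_right_mono)
        hence "ennreal ((\<beta> (fst p) (snd p))\<^sup>2 / fst p) \<le> ennreal (b\<^sup>2 / fst p)" by (rule ennreal_leI)
        thus ?thesis using True unfolding dens_def F_def by (auto simp: indicator_def)
      next
        case False
        thus ?thesis unfolding dens_def by simp
      qed
    qed
  qed
  have step2: "(\<integral>\<^sup>+p. F p \<partial>lborel) = (\<integral>\<^sup>+t. (\<integral>\<^sup>+y. F (t,y) \<partial>lborel) \<partial>lborel)"
    using lborel.nn_integral_fst[OF Fm] by (simp add: lborel_prod)
  define g where "g = (\<lambda>t::real. ennreal (4 * d * K / r) * indicator {0<..a} t + ennreal (1/t) * indicator {a..r} t)"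
  have step3: "(\<integral>\<^sup>+y. F (t,y) \<partial>lborel) \<le> ennreal (b\<^sup>2 * w) * g t" for t
  proof (cases "0 < t \<and> t \<le> r")
    case False
    hence "\<And>y. F (t,y) = 0" unfolding F_def QO by auto
    thus ?thesis by simp
  next
    case True
    define S where "S = {x. dist x0 x < r \<and> r - 4 * K * t \<le> dist x0 x}"
    have "S = ball x0 r - ball x0 (r - 4 * K * t)" unfolding S_def by auto
    hence Sb: "S \<in> sets borel" by simp
    have "\<And>y. F (t,y) = ennreal (b\<^sup>2 / t) * indicator (\<phi> -` S) y"
      unfolding F_def QO S_def using True by (auto simp: indicator_def)
    hence "(\<integral>\<^sup>+y. F (t,y) \<partial>lborel) = ennreal (b\<^sup>2 / t) * emeasure lborel (\<phi> -` S)"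
    proof -
      have "\<phi> -` S \<in> sets lborel" using measurable_sets[OF phim Sb] by simp
      thus ?thesis using \<open>\<And>y. F (t,y) = ennreal (b\<^sup>2 / t) * indicator (\<phi> -` S) y\<close>
        by (simp add: nn_integral_cmult_indicator)
    qed
    also have "\<dots> = ennreal (b\<^sup>2 / t) * emeasure lborel S"
      using preimage_measure[OF bl pl Sb] by simp
    also have "\<dots> \<le> ennreal (b\<^sup>2 * w) * g t"
    proof (cases "t \<le> a")
      case ta: True
      have rho: "0 \<le> r - 4 * K * t" "r - 4 * K * t \<le> r"
      proof -
        have "4 * K * t \<le> 4 * K * a" using ta K2 by simp
        also have "4 * K * a = r / d" unfolding a_def using K2 d1 by (simp add: field_simps)
        also have "r / d \<le> r / 1" using r d1 by (intro divide_left_mono) auto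
        finally show "0 \<le> r - 4 * K * t" by simp
        show "r - 4 * K * t \<le> r" using True K2 by simp
      qed
      have "emeasure lborel S \<le> ennreal (w * (d * (r - (r - 4 * K * t)) / r))"
        unfolding S_def w_def d_def using annulus_bound[OF r rho, of x0] by simp
      hence "ennreal (b\<^sup>2 / t) * emeasure lborel S \<le> ennreal (b\<^sup>2 / t) * ennreal (w * (d * (r - (r - 4 * K * t)) / r))"
        by (rule mult_left_mono) simp
      also have "\<dots> = ennreal (b\<^sup>2 / t * (w * (d * (r - (r - 4 * K * t)) / r)))"
        using True w0 r K2 d1 by (intro ennreal_mult'[symmetric]) auto
      also have "b\<^sup>2 / t * (w * (d * (r - (r - 4 * K * t)) / r)) = (b\<^sup>2 * w) * (4 * d * K / r)"
        using True by (simp add: field_simps)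
      also have "ennreal ((b\<^sup>2 * w) * (4 * d * K / r)) = ennreal (b\<^sup>2 * w) * ennreal (4 * d * K / r)"
        using w0 by (intro ennreal_mult') auto
      also have "\<dots> \<le> ennreal (b\<^sup>2 * w) * g t"
        unfolding g_def using True ta by (intro mult_left_mono) (auto simp: indicator_def)
      finally show ?thesis .
    next
      case ta: False
      have "S \<subseteq> ball x0 r" unfolding S_def by auto
      hence "emeasure lborel S \<le> emeasure lborel (ball x0 r)" by (intro emeasure_mono) auto
      also have "\<dots> = ennreal w" unfolding w_def using r by (simp add: emeasure_ball)
      finally have "ennreal (b\<^sup>2 / t) * emeasure lborel S \<le> ennreal (b\<^sup>2 / t) * ennreal w"
        by (rule mult_left_mono) simp
      also have "\<dots> = ennreal (b\<^sup>2 / t * w)"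
        using True w0 by (intro ennreal_mult'[symmetric]) auto
      also have "b\<^sup>2 / t * w = (b\<^sup>2 * w) * (1 / t)" by simp
      also have "ennreal ((b\<^sup>2 * w) * (1 / t)) = ennreal (b\<^sup>2 * w) * ennreal (1 / t)"
        using w0 by (intro ennreal_mult') auto
      also have "\<dots> \<le> ennreal (b\<^sup>2 * w) * g t"
        unfolding g_def using True ta by (intro mult_left_mono) (auto simp: indicator_def)
      finally show ?thesis .
    qed
    finally show ?thesis .
  qed
  have gm: "g \<in> borel_measurable lborel" unfolding g_def by measurable
  have intg: "(\<integral>\<^sup>+t. g t \<partial>lborel) = ennreal (1 + ln (4 * d * K))"
  proof -
    have "(\<integral>\<^sup>+t. g t \<partial>lborel) = (\<integral>\<^sup>+t. ennreal (4 * d * K / r) * indicator {0<..a} t \<partial>lborel)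
        + (\<integral>\<^sup>+t. ennreal (1/t) * indicator {a..r} t \<partial>lborel)"
      unfolding g_def by (intro nn_integral_add) auto
    also have "(\<integral>\<^sup>+t. ennreal (4 * d * K / r) * indicator {0<..a} t \<partial>lborel) = ennreal (4 * d * K / r) * ennreal a"
      using a0 by (simp add: nn_integral_cmult_indicator)
    also have "\<dots> = ennreal (4 * d * K / r * a)"
    proof -
      have "0 \<le> 4 * d * K / r" by (rule divide_nonneg_pos) (use dK1 r in linarith)+
      thus ?thesis using a0 by (intro ennreal_mult'[symmetric]) auto
    qed
    also have "4 * d * K / r * a = 1"
      using r K2 d1 unfolding a_def by simp
    also have "(\<integral>\<^sup>+t. ennreal (1/t) * indicator {a..r} t \<partial>lborel) = ennreal (ln r - ln a)"
      by (rule int_inv[OF a0 ar])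
    also have "ln r - ln a = ln (4 * d * K)"
      unfolding a_def using r K2 d1 by (simp add: ln_div)
    also have "ennreal 1 + ennreal (ln (4 * d * K)) = ennreal (1 + ln (4 * d * K))"
      using dK1 by (intro ennreal_plus[symmetric]) auto
    finally show ?thesis .
  qed
  have "(\<integral>\<^sup>+t. (\<integral>\<^sup>+y. F (t,y) \<partial>lborel) \<partial>lborel) \<le> (\<integral>\<^sup>+t. ennreal (b\<^sup>2 * w) * g t \<partial>lborel)"
    by (rule nn_integral_mono) (rule step3)
  hence "(\<integral>\<^sup>+p. dens \<beta> p * indicator Q p \<partial>lborel) \<le> (\<integral>\<^sup>+t. ennreal (b\<^sup>2 * w) * g t \<partial>lborel)"
    using step1 unfolding step2 by (rule order_trans[rotated])
  also have "\<dots> = ennreal (b\<^sup>2 * w) * ennreal (1 + ln (4 * d * K))"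
    using nn_integral_cmult[OF gm, of "ennreal (b\<^sup>2 * w)"] intg by simp
  also have "\<dots> = ennreal (b\<^sup>2 * w * (1 + ln (4 * d * K)))"
    using dK1 by (intro ennreal_mult''[symmetric]) auto
  finally show ?thesis unfolding Q_def K_def b_def w_def d_def .
qed

lemma region2:
  fixes \<phi> :: "'a::euclidean_space \<Rightarrow> 'a" and \<beta> :: "real \<Rightarrow> 'a \<Rightarrow> real" and r :: real
  assumes bl: "bi_lipschitz_homeo \<phi>" and pl: "preserves_lebesgue \<phi>" and lb: "Linfty \<beta>" and r: "r > 0"
  shows "(\<integral>\<^sup>+p. dens \<beta> p * indicator {p. 4 * fst p < (r - dist x0 (\<phi> (snd p))) / K_const \<phi>} p \<partial>lborel)
     \<le> carleson_norm (mu_beta \<beta>) * ennreal ((5/3) ^ DIM('a) * (unit_ball_vol DIM('a) * r ^ DIM('a)))"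
proof -
  define K where "K = K_const \<phi>"
  define h where "h = (\<lambda>y. (r - dist x0 (\<phi> y)) / K)"
  define N where "N = carleson_norm (mu_beta \<beta>)"
  define om where "om = unit_ball_vol (real DIM('a))"
  define d where "d = DIM('a)"
  have K2: "K \<ge> 2" unfolding K_def by (rule K_facts(1)[OF bl])
  have om: "om > 0" unfolding om_def by (rule unit_ball_vol_pos) simp
  have phim[measurable]: "\<phi> \<in> borel_measurable borel" by (rule phi_meas[OF bl])
  have phim2[measurable]: "\<phi> \<in> borel_measurable lborel" using phim by simp
  have hm[measurable]: "h \<in> borel_measurable lborel" unfolding h_def by measurable
  have hL: "h y - dist z y \<le> h z" for z y
  proof -
    have "dist (\<phi> z) (\<phi> y) \<le> K * dist z y" unfolding K_def by (rule K_facts(2)[OF bl])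
    moreover have "dist x0 (\<phi> z) \<le> dist x0 (\<phi> y) + dist (\<phi> z) (\<phi> y)"
      by (metis dist_commute dist_triangle)
    ultimately have "dist x0 (\<phi> z) - dist x0 (\<phi> y) \<le> K * dist z y" by linarith
    hence "(r - dist x0 (\<phi> y)) - K * dist z y \<le> (r - dist x0 (\<phi> z))" by linarith
    hence "((r - dist x0 (\<phi> y)) - K * dist z y) / K \<le> (r - dist x0 (\<phi> z)) / K"
      using K2 by (intro divide_right_mono) auto
    thus ?thesis unfolding h_def using K2 by (simp add: diff_divide_distrib)
  qed
  have hU: "h z \<le> h y + dist z y" for z y
    using hL[of z y] hL[of y z] by (simp add: dist_commute)
  define W where "W = (\<lambda>z (p::real\<times>'a). if 0 < h z \<and> dist z (snd p) < h z / 3 \<and> 0 < fst p \<and> fst p \<le> h z / 3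
      then ennreal (1 / (om * (h z / 5) ^ d)) else 0)"
  have Wm: "(\<lambda>(z, p). W z p) \<in> borel_measurable (lborel \<Otimes>\<^sub>M lborel)"
    unfolding W_def by measurable
  define f where "f = (\<lambda>z (p::real\<times>'a). dens \<beta> p * W z p)"
  have dm: "dens \<beta> \<in> borel_measurable lborel" by (rule dens_meas[OF lb])
  have fm: "(\<lambda>(z, p). f z p) \<in> borel_measurable (lborel \<Otimes>\<^sub>M lborel)"
  proof -
    have "(\<lambda>x. dens \<beta> (snd x)) \<in> borel_measurable (lborel \<Otimes>\<^sub>M (lborel :: (real\<times>'a) measure) :: ('a \<times> (real\<times>'a)) measure)"
      by (rule measurable_compose[OF measurable_snd dm])
    thus ?thesis using Wm unfolding f_def by (simp add: case_prod_beta' borel_measurable_times_ennreal)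
  qed
  have Wm1: "(\<lambda>z. W z p) \<in> borel_measurable lborel" for p
  proof -
    have "(\<lambda>z::'a. (z,p)) \<in> measurable lborel (lborel \<Otimes>\<^sub>M lborel)" by measurable
    from measurable_compose[OF this Wm] show ?thesis by simp
  qed
  define P2 where "P2 = {p. 4 * fst p < (r - dist x0 (\<phi> (snd p))) / K_const \<phi>}"
  have one: "1 \<le> (\<integral>\<^sup>+z. W z p \<partial>lborel)" if p: "0 < fst p" "4 * fst p < h (snd p)" for p
  proof -
    define y where "y = snd p"
    define t where "t = fst p"
    define \<rho> where "\<rho> = h y / 4"
    have \<rho>: "\<rho> > 0" "t < \<rho>" "0 < t" using p unfolding \<rho>_def y_def t_def by auto
    have c0: "0 < om * \<rho> ^ d" using om \<rho> by simp
    have Wge: "ennreal (1 / (om * \<rho> ^ d)) * indicator (ball y \<rho>) z \<le> W z p" for z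
    proof (cases "z \<in> ball y \<rho>")
      case True
      hence dz: "dist z y < \<rho>" by (simp add: dist_commute)
      have h1: "h z > 3 * \<rho>" using hL[of y z] dz unfolding \<rho>_def by (simp add: dist_commute)
      have h2: "h z < 5 * \<rho>" using hU[of z y] dz unfolding \<rho>_def by simp
      have cond: "0 < h z \<and> dist z (snd p) < h z / 3 \<and> 0 < fst p \<and> fst p \<le> h z / 3"
        using h1 dz \<rho> unfolding y_def t_def by (auto simp: dist_commute)
      have "(h z / 5) ^ d \<le> \<rho> ^ d" using h1 h2 \<rho> by (intro power_mono) auto
      hence "om * (h z / 5) ^ d \<le> om * \<rho> ^ d" using om by simp
      moreover have "0 < om * (h z / 5) ^ d" using om h1 \<rho> by simp
      ultimately have "1 / (om * \<rho> ^ d) \<le> 1 / (om * (h z / 5) ^ d)"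
        by (intro divide_left_mono) auto
      thus ?thesis using True cond unfolding W_def by (auto intro: ennreal_leI)
    next
      case False thus ?thesis by simp
    qed
    have "(\<integral>\<^sup>+z. ennreal (1 / (om * \<rho> ^ d)) * indicator (ball y \<rho>) z \<partial>lborel)
        = ennreal (1 / (om * \<rho> ^ d)) * emeasure lborel (ball y \<rho>)"
      by (simp add: nn_integral_cmult_indicator)
    also have "emeasure lborel (ball y \<rho>) = ennreal (om * \<rho> ^ d)"
      using \<rho> unfolding om_def d_def by (simp add: emeasure_ball)
    also have "ennreal (1 / (om * \<rho> ^ d)) * ennreal (om * \<rho> ^ d) = ennreal (1 / (om * \<rho> ^ d) * (om * \<rho> ^ d))"
      using c0 by (intro ennreal_mult'[symmetric]) auto
    also have "1 / (om * \<rho> ^ d) * (om * \<rho> ^ d) = 1" using c0 by (metis less_numeral_extra(3) nonzero_divide_eq_eq times_divide_eq_left)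
    finally have "(\<integral>\<^sup>+z. ennreal (1 / (om * \<rho> ^ d)) * indicator (ball y \<rho>) z \<partial>lborel) = 1" by simp
    moreover have "(\<integral>\<^sup>+z. ennreal (1 / (om * \<rho> ^ d)) * indicator (ball y \<rho>) z \<partial>lborel) \<le> (\<integral>\<^sup>+z. W z p \<partial>lborel)"
      by (rule nn_integral_mono) (rule Wge)
    ultimately show ?thesis by simp
  qed
  have step1: "dens \<beta> p * indicator P2 p \<le> (\<integral>\<^sup>+z. f z p \<partial>lborel)" for p
  proof (cases "0 < fst p \<and> p \<in> P2")
    case True
    hence "1 \<le> (\<integral>\<^sup>+z. W z p \<partial>lborel)" using one[of p] unfolding P2_def h_def K_def by auto
    hence "dens \<beta> p * 1 \<le> dens \<beta> p * (\<integral>\<^sup>+z. W z p \<partial>lborel)" by (rule mult_left_mono) simp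
    also have "\<dots> = (\<integral>\<^sup>+z. f z p \<partial>lborel)" unfolding f_def
      using Wm1 by (simp add: nn_integral_cmult)
    finally show ?thesis using True by simp
  next
    case False
    hence "dens \<beta> p * indicator P2 p = 0" unfolding dens_def Om_def by (auto simp: indicator_def)
    thus ?thesis by (simp only: zero_le)
  qed
  have step2: "(\<integral>\<^sup>+p. f z p \<partial>lborel) \<le> N * ennreal ((5/3) ^ d) * indicator {z. 0 < h z} z" for z
  proof (cases "0 < h z")
    case False
    hence "\<And>p. f z p = 0" unfolding f_def W_def by auto
    thus ?thesis by simp
  next
    case True
    define R where "R = h z / 3"
    have R: "R > 0" using True unfolding R_def by simp
    define c where "c = 1 / (om * (h z / 5) ^ d)"
    have c: "c > 0" unfolding c_def using om True by simp
    have box: "carleson_box z R \<in> sets lborel"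
    proof -
      have "carleson_box z R = {0<..R} \<times> ball z R" unfolding carleson_box_def by auto
      also have "\<dots> \<in> sets (lborel \<Otimes>\<^sub>M lborel)" by (intro pair_measureI) auto
      finally show ?thesis by (metis lborel_prod)
    qed
    have "\<And>p. f z p = ennreal c * (dens \<beta> p * indicator (carleson_box z R) p)"
      unfolding f_def W_def c_def R_def carleson_box_def using True
      by (auto simp: indicator_def mult.commute split: prod.splits)
    hence "(\<integral>\<^sup>+p. f z p \<partial>lborel) = ennreal c * (\<integral>\<^sup>+p. dens \<beta> p * indicator (carleson_box z R) p \<partial>lborel)"
      using dm box by (simp add: nn_integral_cmult)
    also have "(\<integral>\<^sup>+p. dens \<beta> p * indicator (carleson_box z R) p \<partial>lborel) = emeasure (mu_beta \<beta>) (carleson_box z R \<inter> Om)"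
      using mu_beta_emeasure[OF lb box] by simp
    also have "carleson_box z R \<inter> Om = carleson_box z R" unfolding carleson_box_def Om_def by auto
    also have "ennreal c * emeasure (mu_beta \<beta>) (carleson_box z R) \<le> ennreal c * (N * ennreal (om * R ^ d))"
      unfolding N_def om_def d_def by (intro mult_left_mono carleson_use R) simp
    also have "ennreal c * (N * ennreal (om * R ^ d)) = N * ennreal (c * (om * R ^ d))"
      using c om R by (simp add: ennreal_mult'[symmetric] mult_ac)
    also have "c * (om * R ^ d) = (5/3) ^ d"
      unfolding c_def R_def using om True by (simp add: field_simps power_divide)
    finally show ?thesis using True by simp
  qed
  have "(\<integral>\<^sup>+p. dens \<beta> p * indicator P2 p \<partial>lborel) \<le> (\<integral>\<^sup>+p. (\<integral>\<^sup>+z. f z p \<partial>lborel) \<partial>lborel)"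
    by (rule nn_integral_mono) (rule step1)
  also have "\<dots> = (\<integral>\<^sup>+z. (\<integral>\<^sup>+p. f z p \<partial>lborel) \<partial>lborel)"
    by (rule lborel_pair.Fubini'[OF fm])
  also have "\<dots> \<le> (\<integral>\<^sup>+z. N * ennreal ((5/3) ^ d) * indicator {z. 0 < h z} z \<partial>lborel)"
    by (rule nn_integral_mono) (rule step2)
  also have "\<dots> = N * ennreal ((5/3) ^ d) * emeasure lborel {z. 0 < h z}"
  proof -
    have "{z. 0 < h z} = h -` {0<..} \<inter> space lborel" by auto
    hence "{z. 0 < h z} \<in> sets lborel" using measurable_sets[OF hm, of "{0<..}"] by simp
    thus ?thesis by (simp add: nn_integral_cmult_indicator)
  qed
  also have "{z. 0 < h z} = \<phi> -` ball x0 r"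
    unfolding h_def using K2 by (auto simp: zero_less_divide_iff dist_commute)
  also have "emeasure lborel (\<phi> -` ball x0 r) = ennreal (om * r ^ d)"
    using preimage_measure[OF bl pl, of "ball x0 r"] r unfolding om_def d_def by (simp add: emeasure_ball)
  also have "N * ennreal ((5/3) ^ d) * ennreal (om * r ^ d) = N * ennreal ((5/3) ^ d * (om * r ^ d))"
    using om r by (simp add: ennreal_mult'[symmetric] mult.assoc)
  finally show ?thesis unfolding P2_def N_def om_def d_def .
qed

lemma box_bound:
  fixes \<phi> :: "'a::euclidean_space \<Rightarrow> 'a" and \<beta> :: "real \<Rightarrow> 'a \<Rightarrow> real" and r :: real
  assumes bl: "bi_lipschitz_homeo \<phi>" and pl: "preserves_lebesgue \<phi>" and lb: "Linfty \<beta>" and r: "r > 0"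
  shows "emeasure (pullback (mu_beta \<beta>) \<phi>) (carleson_box x0 r) \<le>
    (ennreal ((Linfty_norm \<beta>)\<^sup>2 * (1 + ln (4 * real DIM('a) * K_const \<phi>)))
      + carleson_norm (mu_beta \<beta>) * ennreal ((5/3) ^ DIM('a))) * ennreal (unit_ball_vol DIM('a) * r ^ DIM('a))"
proof -
  define K where "K = K_const \<phi>"
  have K2: "K \<ge> 2" unfolding K_def by (rule K_facts(1)[OF bl])
  note [measurable] = phi_meas[OF bl]
  have phim2[measurable]: "\<phi> \<in> borel_measurable lborel" using phi_meas[OF bl] by simp
  define P where "P = {p::real\<times>'a. \<phi> (snd p) \<in> ball x0 r \<and> fst p \<le> r}"
  define P1 where "P1 = {p::real\<times>'a. \<phi> (snd p) \<in> ball x0 r \<and> fst p \<le> r \<and>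
            r - dist x0 (\<phi> (snd p)) \<le> 4 * K_const \<phi> * fst p}"
  define P2 where "P2 = {p::real\<times>'a. 4 * fst p < (r - dist x0 (\<phi> (snd p))) / K_const \<phi>}"
  have Pb: "P \<in> sets borel" unfolding P_def by measurable
  have P1b: "P1 \<in> sets borel" unfolding P1_def by measurable
  have P2b: "P2 \<in> sets borel" unfolding P2_def by measurable
  have dm: "dens \<beta> \<in> borel_measurable lborel" by (rule dens_meas[OF lb])
  define w where "w = unit_ball_vol DIM('a) * r ^ DIM('a)"
  have w0: "w \<ge> 0" unfolding w_def using r by simp
  have "emeasure (pullback (mu_beta \<beta>) \<phi>) (carleson_box x0 r) = emeasure (mu_beta \<beta>) (P \<inter> Om)"
    unfolding P_def by (rule pullback_box[OF bl])
  also have "\<dots> = (\<integral>\<^sup>+p. dens \<beta> p * indicator P p \<partial>lborel)"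
    using Pb by (intro mu_beta_emeasure[OF lb]) simp
  also have "\<dots> \<le> (\<integral>\<^sup>+p. dens \<beta> p * indicator P1 p + dens \<beta> p * indicator P2 p \<partial>lborel)"
  proof (rule nn_integral_mono)
    fix p :: "real \<times> 'a"
    show "dens \<beta> p * indicator P p \<le> dens \<beta> p * indicator P1 p + dens \<beta> p * indicator P2 p"
    proof (cases "p \<in> P")
      case False thus ?thesis by simp
    next
      case True
      show ?thesis
      proof (cases "r - dist x0 (\<phi> (snd p)) \<le> 4 * K * fst p")
        case True2: True
        hence "p \<in> P1" using True unfolding P_def P1_def K_def by simp
        thus ?thesis using True by simp
      next
        case False
        hence "4 * fst p < (r - dist x0 (\<phi> (snd p))) / K" using K2 by (simp add: field_simps)
        hence "p \<in> P2" unfolding P2_def K_def by simp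
        thus ?thesis using True by simp
      qed
    qed
  qed
  also have "\<dots> = (\<integral>\<^sup>+p. dens \<beta> p * indicator P1 p \<partial>lborel) + (\<integral>\<^sup>+p. dens \<beta> p * indicator P2 p \<partial>lborel)"
    using P1b P2b dm by (intro nn_integral_add) auto
  also have "\<dots> \<le> ennreal ((Linfty_norm \<beta>)\<^sup>2 * w * (1 + ln (4 * real DIM('a) * K_const \<phi>)))
      + carleson_norm (mu_beta \<beta>) * ennreal ((5/3) ^ DIM('a) * w)"
    unfolding P1_def P2_def w_def
    by (intro add_mono region1[OF bl pl lb r] region2[OF bl pl lb r])
  also have "\<dots> = (ennreal ((Linfty_norm \<beta>)\<^sup>2 * (1 + ln (4 * real DIM('a) * K_const \<phi>)))
      + carleson_norm (mu_beta \<beta>) * ennreal ((5/3) ^ DIM('a))) * ennreal w"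
  proof -
    have l: "0 \<le> 1 + ln (4 * real DIM('a) * K_const \<phi>)"
    proof -
      have "1 * 1 \<le> real DIM('a) * K_const \<phi>" using K2 unfolding K_def
        by (intro mult_mono) (auto simp: DIM_positive Suc_le_eq)
      hence "1 \<le> 4 * real DIM('a) * K_const \<phi>" by simp
      thus ?thesis by simp
    qed
    have "ennreal ((Linfty_norm \<beta>)\<^sup>2 * w * (1 + ln (4 * real DIM('a) * K_const \<phi>)))
        = ennreal ((Linfty_norm \<beta>)\<^sup>2 * (1 + ln (4 * real DIM('a) * K_const \<phi>))) * ennreal w"
      using l w0 by (subst ennreal_mult'[symmetric]) (auto simp: mult_ac)
    moreover have "ennreal ((5/3) ^ DIM('a) * w) = ennreal ((5/3) ^ DIM('a)) * ennreal w"
      using w0 by (simp add: ennreal_mult)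
    ultimately show ?thesis by (simp add: distrib_right mult.assoc)
  qed
  finally show ?thesis unfolding w_def .
qed

theorem theorem2p7:
  "\<exists>C::real. C > 0 \<and>
    (\<forall>(\<phi>::'a::euclidean_space \<Rightarrow> 'a) (\<beta>::real \<Rightarrow> 'a \<Rightarrow> real).
      bi_lipschitz_homeo \<phi> \<and> preserves_lebesgue \<phi> \<and> Linfty \<beta> \<and> is_carleson (mu_beta \<beta>) \<longrightarrow>
        is_carleson (pullback (mu_beta \<beta>) \<phi>) \<and>
        carleson_norm (pullback (mu_beta \<beta>) \<phi>) \<le>
          ennreal C * (carleson_norm (mu_beta \<beta>)
                       + ennreal (ln (K_const \<phi>) * (Linfty_norm \<beta>)\<^sup>2)))"
proof -
  define d where "d = real DIM('a)"
  have d1: "d \<ge> 1" unfolding d_def by (simp add: DIM_positive Suc_le_eq)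
  define c0 where "c0 = 1 + ln (4 * d)"
  have c0: "c0 \<ge> 1" unfolding c0_def using d1 by simp
  define C where "C = max ((5/3) ^ DIM('a)) (c0 / ln 2 + 1)"
  have C1: "C \<ge> (5/3) ^ DIM('a)" "C \<ge> c0 / ln 2 + 1" unfolding C_def by auto
  have "(5/3::real) ^ DIM('a) > 0" by simp
  hence Cpos: "C > 0" using C1(1) by linarith
  show ?thesis
  proof (intro exI[of _ C] conjI allI impI Cpos)
    fix \<phi> :: "'a \<Rightarrow> 'a" and \<beta> :: "real \<Rightarrow> 'a \<Rightarrow> real"
    assume A: "bi_lipschitz_homeo \<phi> \<and> preserves_lebesgue \<phi> \<and> Linfty \<beta> \<and> is_carleson (mu_beta \<beta>)"
    hence bl: "bi_lipschitz_homeo \<phi>" and pl: "preserves_lebesgue \<phi>" and lb: "Linfty \<beta>"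
      and ic: "is_carleson (mu_beta \<beta>)" by auto
    define K where "K = K_const \<phi>"
    define b where "b = Linfty_norm \<beta>"
    define N where "N = carleson_norm (mu_beta \<beta>)"
    have K2: "K \<ge> 2" unfolding K_def by (rule K_facts(1)[OF bl])
    have Nfin: "N < \<infinity>" using ic unfolding is_carleson_def N_def by simp
    define X where "X = ennreal C * (N + ennreal (ln K * b\<^sup>2))"
    have key: "ennreal (b\<^sup>2 * (1 + ln (4 * d * K))) + N * ennreal ((5/3) ^ DIM('a)) \<le> X"
    proof -
      have lnK: "ln K \<ge> ln 2" using K2 by simp
      have ln2: "ln (2::real) > 0" by simp
      have lnK0: "ln K \<ge> 0" using lnK ln2 by linarith
      have "1 + ln (4 * d * K) = c0 + ln K"
        unfolding c0_def using d1 K2 by (simp add: ln_mult)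
      also have "c0 = (c0 / ln 2) * ln 2" using ln2 by simp
      also have "(c0 / ln 2) * ln 2 \<le> (c0 / ln 2) * ln K"
        using lnK c0 ln2 by (intro mult_left_mono) auto
      also have "c0 / ln 2 * ln K + ln K = (c0 / ln 2 + 1) * ln K" by (simp add: algebra_simps)
      also have "\<dots> \<le> C * ln K" using C1(2) lnK0 by (intro mult_right_mono) auto
      finally have r1: "1 + ln (4 * d * K) \<le> C * ln K" by simp
      have "b\<^sup>2 * (1 + ln (4 * d * K)) \<le> b\<^sup>2 * (C * ln K)" using r1 by (intro mult_left_mono) auto
      hence e1: "ennreal (b\<^sup>2 * (1 + ln (4 * d * K))) \<le> ennreal C * ennreal (ln K * b\<^sup>2)"
        using Cpos lnK0 by (subst ennreal_mult'[symmetric]) (auto intro!: ennreal_leI simp: mult_ac)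
      have e2: "N * ennreal ((5/3) ^ DIM('a)) \<le> ennreal C * N"
        using C1(1) by (subst mult.commute) (intro mult_right_mono ennreal_leI, auto)
      have "ennreal (b\<^sup>2 * (1 + ln (4 * d * K))) + N * ennreal ((5/3) ^ DIM('a))
          \<le> ennreal C * ennreal (ln K * b\<^sup>2) + ennreal C * N"
        using e1 e2 by (rule add_mono)
      also have "\<dots> = X" unfolding X_def distrib_left by (rule add.commute)
      finally show ?thesis .
    qed
    have bound: "carleson_norm (pullback (mu_beta \<beta>) \<phi>) \<le> X"
      unfolding carleson_norm_def
    proof (rule SUP_least)
      fix p :: "'a \<times> real" assume "p \<in> {p. snd p > 0}"
      hence r: "snd p > 0" by simp
      define w where "w = unit_ball_vol (real DIM('a)) * snd p ^ DIM('a)"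
      have up: "unit_ball_vol (real DIM('a)) > 0" by (rule unit_ball_vol_pos) simp
      have w0: "w > 0" unfolding w_def using up r by simp
      have ball: "emeasure lborel (ball (fst p) (snd p)) = ennreal w"
        unfolding w_def using r by (simp add: emeasure_ball)
      have "emeasure (pullback (mu_beta \<beta>) \<phi>) (carleson_box (fst p) (snd p)) \<le> 
        (ennreal (b\<^sup>2 * (1 + ln (4 * d * K))) + N * ennreal ((5/3) ^ DIM('a))) * ennreal w"
        using box_bound[OF bl pl lb r, of "fst p"] unfolding w_def K_def b_def N_def d_def .
      also have "\<dots> \<le> X * ennreal w" by (rule mult_right_mono[OF key]) simp
      finally have "emeasure (pullback (mu_beta \<beta>) \<phi>) (carleson_box (fst p) (snd p)) \<le> X * ennreal w" .
      hence "emeasure (pullback (mu_beta \<beta>) \<phi>) (carleson_box (fst p) (snd p)) / ennreal w \<le> X * ennreal w / ennreal w"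
        by (rule divide_right_mono_ennreal)
      also have "X * ennreal w / ennreal w = X" using w0 by (intro mult_divide_eq_ennreal) auto
      finally show "emeasure (pullback (mu_beta \<beta>) \<phi>) (carleson_box (fst p) (snd p)) / emeasure lborel (ball (fst p) (snd p)) \<le> X"
        unfolding ball .
    qed
    have Xfin: "X < \<infinity>" unfolding X_def using Nfin by (simp add: ennreal_mult_less_top)
    show "is_carleson (pullback (mu_beta \<beta>) \<phi>)" unfolding is_carleson_def
      using bound Xfin by (rule le_less_trans)
    show "carleson_norm (pullback (mu_beta \<beta>) \<phi>) \<le> ennreal C * (carleson_norm (mu_beta \<beta>) + ennreal (ln (K_const \<phi>) * (Linfty_norm \<beta>)\<^sup>2))"
      using bound unfolding X_def N_def K_def b_def .
  qed
qed

end
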